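(* Let $n\ge0$ and let $\mathcal V$ be a variety with $n+2$ Gumm terms. If $h\ge0$ and $m=4h+2$, then $\mathcal V$ satisfies $$\alpha(\beta\circ_{m+1}\gamma)\subseteq\alpha(\gamma\circ_{2h+2}\beta)\circ(\alpha\gamma\circ_{mn}\alpha\beta)\quad\text{and}\quad \alpha(\beta\circ_{m+1}\gamma)\subseteq(\alpha\beta\circ_{mn}\alpha\gamma)\circ\alpha(\beta\circ_{2h+2}\gamma).$$ If $h\ge1$ and $m=4h$, then $\mathcal V$ satisfies $$\alpha(\beta\circ_{m+1}\gamma)\subseteq\alpha(\beta\circ_{2h+1}\gamma)\circ(\alpha\gamma\circ_{mn}\alpha\beta).$$
   Context: Here $\alpha,\beta,\gamma$ range over congruences of algebras in $\mathcal V$. $\circ$ is relational composition, juxtaposition is intersection. For relations $X,Y$ and $m\ge1$, $X\circ_m Y$ denotes $X\circ Y\circ X\circ\cdots$ with $m$ factors; $X\circ_0Y$ is the identity relation. A variety has $n+2$ Gumm terms if it has ternary terms $p,j_1,\dots,j_{n+1}$ satisfying: $x=j_i(x,y,x)$ for all $i$; $x=p(x,z,z)$; $p(x,x,z)=j_1(x,x,z)$; $j_i(x,z,z)=j_{i+1}(x,z,z)$ for odd $i\le n$; $j_i(x,x,z)=j_{i+1}(x,x,z)$ for even $i\le n$; $j_{n+1}(x,y,z)=z$. *)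

theory Defs
  imports Main
begin

datatype 'f trm = Var nat | Op 'f "'f trm list"

fun wf_trm :: "('f \<Rightarrow> nat) \<Rightarrow> 'f trm \<Rightarrow> bool" where
  "wf_trm ar (Var i) = True"
| "wf_trm ar (Op f ts) = (length ts = ar f \<and> (\<forall>t\<in>set ts. wf_trm ar t))"

fun vars_trm :: "'f trm \<Rightarrow> nat set" where
  "vars_trm (Var i) = {i}"
| "vars_trm (Op f ts) = (\<Union>t\<in>set ts. vars_trm t)"

fun trm_subst :: "(nat \<Rightarrow> 'f trm) \<Rightarrow> 'f trm \<Rightarrow> 'f trm" where
  "trm_subst \<sigma> (Var i) = \<sigma> i"
| "trm_subst \<sigma> (Op f ts) = Op f (map (trm_subst \<sigma>) ts)"

fun eval_trm :: "('f \<Rightarrow> 'a list \<Rightarrow> 'a) \<Rightarrow> (nat \<Rightarrow> 'a) \<Rightarrow> 'f trm \<Rightarrow> 'a" where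
  "eval_trm F v (Var i) = v i"
| "eval_trm F v (Op f ts) = F f (map (eval_trm F v) ts)"

definition is_algebra :: "('f \<Rightarrow> nat) \<Rightarrow> 'a set \<Rightarrow> ('f \<Rightarrow> 'a list \<Rightarrow> 'a) \<Rightarrow> bool" where
  "is_algebra ar A F \<longleftrightarrow>
     (\<forall>f as. length as = ar f \<longrightarrow> set as \<subseteq> A \<longrightarrow> F f as \<in> A)"

definition satisfies_id :: "'a set \<Rightarrow> ('f \<Rightarrow> 'a list \<Rightarrow> 'a) \<Rightarrow> 'f trm \<times> 'f trm \<Rightarrow> bool" where
  "satisfies_id A F e \<longleftrightarrow>
     (\<forall>v. (\<forall>i. v i \<in> A) \<longrightarrow> eval_trm F v (fst e) = eval_trm F v (snd e))"

text \<open>The variety defined by the set of identities Sig (Birkhoff: every variety is of this form).\<close>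
definition in_variety :: "('f \<Rightarrow> nat) \<Rightarrow> ('f trm \<times> 'f trm) set \<Rightarrow> 'a set \<Rightarrow> ('f \<Rightarrow> 'a list \<Rightarrow> 'a) \<Rightarrow> bool" where
  "in_variety ar Sig A F \<longleftrightarrow> is_algebra ar A F \<and> (\<forall>e\<in>Sig. satisfies_id A F e)"

text \<open>Equational consequence (Birkhoff's equational logic); by completeness this is
  exactly "the identity holds in every algebra of the variety".\<close>
inductive derivable :: "('f \<Rightarrow> nat) \<Rightarrow> ('f trm \<times> 'f trm) set \<Rightarrow> 'f trm \<Rightarrow> 'f trm \<Rightarrow> bool"
  for ar Sig where
  ax: "(s, t) \<in> Sig \<Longrightarrow> derivable ar Sig s t"
| refl: "derivable ar Sig t t"
| sym: "derivable ar Sig s t \<Longrightarrow> derivable ar Sig t s"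
| trans: "derivable ar Sig s t \<Longrightarrow> derivable ar Sig t u \<Longrightarrow> derivable ar Sig s u"
| subst: "derivable ar Sig s t \<Longrightarrow> (\<forall>i. wf_trm ar (\<sigma> i)) \<Longrightarrow>
           derivable ar Sig (trm_subst \<sigma> s) (trm_subst \<sigma> t)"
| cong: "length ss = ar f \<Longrightarrow> list_all2 (derivable ar Sig) ss ts \<Longrightarrow>
           derivable ar Sig (Op f ss) (Op f ts)"

definition ternary_trm :: "('f \<Rightarrow> nat) \<Rightarrow> 'f trm \<Rightarrow> bool" where
  "ternary_trm ar t \<longleftrightarrow> wf_trm ar t \<and> vars_trm t \<subseteq> {0, 1, 2}"

definition app3 :: "'f trm \<Rightarrow> 'f trm \<Rightarrow> 'f trm \<Rightarrow> 'f trm \<Rightarrow> 'f trm" where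
  "app3 t a b c = trm_subst (\<lambda>i. if i = 0 then a else if i = 1 then b else if i = 2 then c else Var i) t"

abbreviation vx :: "'f trm" where "vx \<equiv> Var 0"
abbreviation vy :: "'f trm" where "vy \<equiv> Var 1"
abbreviation vz :: "'f trm" where "vz \<equiv> Var 2"

text \<open>The variety with identities Sig has n+2 Gumm terms p, j 1, ..., j (n+1).\<close>
definition gumm_terms ::
  "('f \<Rightarrow> nat) \<Rightarrow> ('f trm \<times> 'f trm) set \<Rightarrow> nat \<Rightarrow> 'f trm \<Rightarrow> (nat \<Rightarrow> 'f trm) \<Rightarrow> bool" where
  "gumm_terms ar Sig n p j \<longleftrightarrow>
     ternary_trm ar p \<and> (\<forall>i\<in>{1..n+1}. ternary_trm ar (j i)) \<and>
     (\<forall>i\<in>{1..n+1}. derivable ar Sig vx (app3 (j i) vx vy vx)) \<and>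
     derivable ar Sig vx (app3 p vx vz vz) \<and>
     derivable ar Sig (app3 p vx vx vz) (app3 (j 1) vx vx vz) \<and>
     (\<forall>i\<in>{1..n}. odd i \<longrightarrow> derivable ar Sig (app3 (j i) vx vz vz) (app3 (j (i+1)) vx vz vz)) \<and>
     (\<forall>i\<in>{1..n}. even i \<longrightarrow> derivable ar Sig (app3 (j i) vx vx vz) (app3 (j (i+1)) vx vx vz)) \<and>
     derivable ar Sig (app3 (j (n+1)) vx vy vz) vz"

definition is_congruence :: "('f \<Rightarrow> nat) \<Rightarrow> 'a set \<Rightarrow> ('f \<Rightarrow> 'a list \<Rightarrow> 'a) \<Rightarrow> 'a rel \<Rightarrow> bool" where
  "is_congruence ar A F \<theta> \<longleftrightarrow> equiv A \<theta> \<and>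
     (\<forall>f as bs. length as = ar f \<longrightarrow> list_all2 (\<lambda>a b. (a, b) \<in> \<theta>) as bs \<longrightarrow> (F f as, F f bs) \<in> \<theta>)"

fun altcomp :: "'a rel \<Rightarrow> 'a rel \<Rightarrow> nat \<Rightarrow> 'a rel" where
  "altcomp X Y 0 = Id"
| "altcomp X Y (Suc m) = X O altcomp Y X m"

end

theory Submission
  imports Defs
begin


lemma eval_closed:
  "is_algebra ar A F \<Longrightarrow> wf_trm ar t \<Longrightarrow> (\<forall>i. v i \<in> A) \<Longrightarrow> eval_trm F v t \<in> A"
proof (induction t)
  case (Var i) then show ?case by simp
next
  case (Op f ts)
  then have "set (map (eval_trm F v) ts) \<subseteq> A" by auto
  then show ?case using Op.prems unfolding is_algebra_def by simp
qed

lemma eval_cong_vars: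
  "(\<forall>i\<in>vars_trm t. v i = v' i) \<Longrightarrow> eval_trm F v t = eval_trm F v' t"
proof (induction t)
  case (Var i) then show ?case by simp
next
  case (Op f ts)
  then have "map (eval_trm F v) ts = map (eval_trm F v') ts" by (auto simp: map_eq_conv)
  then show ?case by (simp only: eval_trm.simps)
qed

lemma eval_subst:
  "eval_trm F v (trm_subst \<sigma> t) = eval_trm F (\<lambda>i. eval_trm F v (\<sigma> i)) t"
proof (induction t)
  case (Var i) then show ?case by simp
next
  case (Op f ts)
  then show ?case by (simp cong: map_cong)
qed

lemma sound:
  assumes alg: "in_variety ar Sig A F"
  shows "derivable ar Sig s t \<Longrightarrow> (\<forall>i. v i \<in> A) \<Longrightarrow> eval_trm F v s = eval_trm F v t"
proof (induction arbitrary: v rule: derivable.induct)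
  case (ax s t)
  then show ?case using alg unfolding in_variety_def satisfies_id_def by fastforce
next
  case (refl t) then show ?case by simp
next
  case (sym s t) then show ?case by simp
next
  case (trans s t u) then show ?case by simp
next
  case (subst s t \<sigma>)
  have "\<forall>i. eval_trm F v (\<sigma> i) \<in> A"
    using subst alg eval_closed unfolding in_variety_def by blast
  then show ?case using subst by (simp add: eval_subst)
next
  case (cong ss f ts)
  have "map (eval_trm F v) ss = map (eval_trm F v) ts"
    using cong.IH cong.prems
    by (induction ss ts rule: list_all2_induct) auto
  then show ?case by simp
qed

lemma eval_compat:
  assumes c: "is_congruence ar A F \<theta>"
  shows "wf_trm ar t \<Longrightarrow> (\<forall>i. (v i, v' i) \<in> \<theta>) \<Longrightarrow> (eval_trm F v t, eval_trm F v' t) \<in> \<theta>"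
proof (induction t)
  case (Var i) then show ?case by simp
next
  case (Op f ts)
  have "list_all2 (\<lambda>a b. (a, b) \<in> \<theta>) (map (eval_trm F v) ts) (map (eval_trm F v') ts)"
    using Op by (simp add: list_all2_map1 list_all2_map2 list_all2_same)
  then show ?case using c Op.prems unfolding is_congruence_def by simp
qed

definition val3 :: "'a \<Rightarrow> 'a \<Rightarrow> 'a \<Rightarrow> nat \<Rightarrow> 'a" where
  "val3 u v w = (\<lambda>i. if i = 0 then u else if i = 1 then v else w)"

definition ev3 :: "('f \<Rightarrow> 'a list \<Rightarrow> 'a) \<Rightarrow> 'f trm \<Rightarrow> 'a \<Rightarrow> 'a \<Rightarrow> 'a \<Rightarrow> 'a" where
  "ev3 F t u v w = eval_trm F (val3 u v w) t"

lemma app3_eval: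
  assumes "ternary_trm ar t"
  shows "eval_trm F v (app3 t a b c) = ev3 F t (eval_trm F v a) (eval_trm F v b) (eval_trm F v c)"
  unfolding app3_def ev3_def eval_subst
  apply (rule eval_cong_vars)
  using assms unfolding ternary_trm_def val3_def by auto

lemma gen_id:
  assumes "in_variety ar Sig A F" "derivable ar Sig s t" "x \<in> A" "y \<in> A" "z \<in> A"
  shows "eval_trm F (val3 x y z) s = eval_trm F (val3 x y z) t"
  using sound[OF assms(1,2)] assms(3-5) unfolding val3_def by auto

lemma ev3_closed:
  "is_algebra ar A F \<Longrightarrow> ternary_trm ar t \<Longrightarrow> u \<in> A \<Longrightarrow> v \<in> A \<Longrightarrow> w \<in> A \<Longrightarrow> ev3 F t u v w \<in> A"
  unfolding ev3_def ternary_trm_def by (rule eval_closed) (auto simp: val3_def)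

lemma ev3_compat:
  "is_congruence ar A F \<theta> \<Longrightarrow> ternary_trm ar t \<Longrightarrow> (u, u') \<in> \<theta> \<Longrightarrow> (v, v') \<in> \<theta> \<Longrightarrow> (w, w') \<in> \<theta>
   \<Longrightarrow> (ev3 F t u v w, ev3 F t u' v' w') \<in> \<theta>"
  unfolding ev3_def ternary_trm_def by (rule eval_compat) (auto simp: val3_def)

lemma altcomp_last:
  "altcomp X Y (Suc N) = altcomp X Y N O (if even N then X else Y)"
proof (induction N arbitrary: X Y)
  case 0 then show ?case by simp
next
  case (Suc N)
  have "altcomp X Y (Suc (Suc N)) = X O altcomp Y X (Suc N)" by simp
  also have "\<dots> = X O (altcomp Y X N O (if even N then Y else X))" using Suc by simp
  also have "\<dots> = altcomp X Y (Suc N) O (if even (Suc N) then X else Y)" by (simp add: O_assoc)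
  finally show ?case .
qed

lemma altcomp_add:
  "altcomp X Y (2 * a + b) = altcomp X Y (2 * a) O altcomp X Y b"
  by (induction a) (auto simp: O_assoc)

lemma altcomp_conv:
  assumes "sym X" "sym Y"
  shows "converse (altcomp X Y N) = (if even N then altcomp Y X N else altcomp X Y N)"
using assms proof (induction N arbitrary: X Y)
  case 0 then show ?case by simp
next
  case (Suc N)
  have cX: "converse X = X" using Suc.prems sym_conv_converse_eq by auto
  have "converse (altcomp X Y (Suc N)) = converse (altcomp Y X N) O X"
    by (simp add: converse_relcomp cX)
  also have "\<dots> = (if even N then altcomp X Y N else altcomp Y X N) O X"
    using Suc by simp
  also have "\<dots> = (if even (Suc N) then altcomp Y X (Suc N) else altcomp X Y (Suc N))"
    using altcomp_last[of X Y N] altcomp_last[of Y X N] by (cases "even N") (simp_all del: altcomp.simps)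
  finally show ?case .
qed

lemma altcomp_path:
  "(a, c) \<in> altcomp X Y N \<longleftrightarrow>
   (\<exists>x. x 0 = a \<and> x N = c \<and> (\<forall>k<N. (x k, x (Suc k)) \<in> (if even k then X else Y)))"
proof (induction N arbitrary: X Y a)
  case 0 then show ?case by auto
next
  case (Suc N)
  show ?case
  proof
    assume "(a, c) \<in> altcomp X Y (Suc N)"
    then obtain b where ab: "(a, b) \<in> X" and bc: "(b, c) \<in> altcomp Y X N" by auto
    from bc Suc.IH obtain x where x: "x 0 = b" "x N = c"
      "\<forall>k<N. (x k, x (Suc k)) \<in> (if even k then Y else X)" by blast
    define x' where "x' = (\<lambda>k. if k = 0 then a else x (k - 1))"
    have "\<forall>k<Suc N. (x' k, x' (Suc k)) \<in> (if even k then X else Y)"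
    proof (intro allI impI)
      fix k assume k: "k < Suc N"
      show "(x' k, x' (Suc k)) \<in> (if even k then X else Y)"
      proof (cases k)
        case 0 then show ?thesis using ab x by (simp add: x'_def)
      next
        case (Suc k')
        then show ?thesis using x(3) k by (auto simp: x'_def)
      qed
    qed
    moreover have "x' 0 = a" "x' (Suc N) = c" using x by (auto simp: x'_def)
    ultimately show "\<exists>x. x 0 = a \<and> x (Suc N) = c \<and> (\<forall>k<Suc N. (x k, x (Suc k)) \<in> (if even k then X else Y))"
      by blast
  next
    assume "\<exists>x. x 0 = a \<and> x (Suc N) = c \<and> (\<forall>k<Suc N. (x k, x (Suc k)) \<in> (if even k then X else Y))"
    then obtain x where x: "x 0 = a" "x (Suc N) = c"
      "\<forall>k<Suc N. (x k, x (Suc k)) \<in> (if even k then X else Y)" by blast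
    have "(a, x 1) \<in> X" using x by (metis One_nat_def even_zero zero_less_Suc)
    moreover have "(x 1, c) \<in> altcomp Y X N"
      unfolding Suc.IH
      apply (rule exI[of _ "\<lambda>k. x (Suc k)"])
      using x by auto
    ultimately show "(a, c) \<in> altcomp X Y (Suc N)" by auto
  qed
qed

lemma altcomp_merge:
  assumes "trans Y" "even N" "N \<ge> 2" "even m" "m \<ge> 2"
  shows "altcomp X Y N O altcomp Y X m O Y \<subseteq> altcomp X Y (N + m)"
proof -
  obtain N' where N': "N = Suc N'" "odd N'" using assms by (cases N) auto
  obtain m' where m': "m = Suc m'" "odd m'" using assms by (cases m) auto
  have e1: "altcomp X Y N = altcomp X Y N' O Y" using N' altcomp_last[of X Y N'] by (simp del: altcomp.simps)
  have e2: "altcomp Y X m = Y O altcomp X Y m'" using m' by simp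
  have e3: "altcomp X Y m' O Y = altcomp X Y m" using m' altcomp_last[of X Y m'] by (simp del: altcomp.simps)
  have e4: "altcomp X Y (N + m) = altcomp X Y N O altcomp X Y m"
    using altcomp_add[of X Y "N div 2" m] assms(2) by simp
  have YY: "Y O Y \<subseteq> Y" using assms(1) trans_O_subset by blast
  have "altcomp X Y N O altcomp Y X m O Y = altcomp X Y N' O (Y O Y) O (altcomp X Y m' O Y)"
    by (simp add: e1 e2 O_assoc)
  also have "\<dots> \<subseteq> altcomp X Y N' O Y O (altcomp X Y m' O Y)"
    using YY by (meson relcomp_mono subset_refl)
  also have "\<dots> = altcomp X Y (N + m)" by (simp add: e3 e4 e1 O_assoc)
  finally show ?thesis .
qed




lemma cong_facts:
  assumes "is_congruence ar A F \<theta>"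
  shows "\<theta> \<subseteq> A \<times> A" "sym \<theta>" "trans \<theta>" "\<And>a. a \<in> A \<Longrightarrow> (a, a) \<in> \<theta>"
  using assms unfolding is_congruence_def equiv_def refl_on_def by auto

lemma core:
  fixes ar :: "'f \<Rightarrow> nat" and Sig :: "('f trm \<times> 'f trm) set"
    and n :: nat and p :: "'f trm" and j :: "nat \<Rightarrow> 'f trm"
    and A :: "'a set" and F :: "'f \<Rightarrow> 'a list \<Rightarrow> 'a"
    and \<alpha> \<beta> \<gamma> :: "'a rel"
  assumes gumm: "gumm_terms ar Sig n p j"
    and alg: "in_variety ar Sig A F"
    and ca: "is_congruence ar A F \<alpha>"
    and cb: "is_congruence ar A F \<beta>"
    and cg: "is_congruence ar A F \<gamma>"
    and NM: "N = 2 * M + 1" and M1: "M \<ge> 1"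
    and ac: "(a, c) \<in> \<alpha>" "(a, c) \<in> altcomp \<beta> \<gamma> N"
  shows "(a, c) \<in> (\<alpha> \<inter> converse (altcomp \<beta> \<gamma> (M + 1))) O altcomp (\<alpha> \<inter> \<gamma>) (\<alpha> \<inter> \<beta>) (2 * M * n)"
proof -
  define B where "B k = (if even k then \<beta> else \<gamma>)" for k :: nat
  obtain x where x0: "x 0 = a" and xN: "x N = c"
    and xs: "\<forall>k<N. (x k, x (Suc k)) \<in> B k"
    using ac(2) unfolding altcomp_path B_def by blast
  have cB: "is_congruence ar A F (B k)" for k using cb cg by (simp add: B_def)
  note cfa = cong_facts[OF ca] and cfB = cong_facts[OF cB]
  have ia: "is_algebra ar A F" using alg unfolding in_variety_def by simp
  have aA: "a \<in> A" and cA: "c \<in> A" using ac(1) cfa(1) by auto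
  have xA: "x k \<in> A" if "k \<le> N" for k
  proof (cases "k < N")
    case True then show ?thesis using xs cfB(1) by blast
  next
    case False then show ?thesis using that xN cA by simp
  qed
  have xsym: "(x (Suc k), x k) \<in> B k" if "k < N" for k
    using xs that cfB(2) by (meson symD)
  have tp: "ternary_trm ar p" and tj: "\<And>i. i \<in> {1..n+1} \<Longrightarrow> ternary_trm ar (j i)"
    using gumm unfolding gumm_terms_def by auto
  define P where "P u v w = ev3 F p u v w" for u v w
  define J where "J i u v w = ev3 F (j i) u v w" for i u v w
  have evx: "eval_trm F (val3 u v w) vx = u" "eval_trm F (val3 u v w) vy = v"
     "eval_trm F (val3 u v w) vz = w" for u v w :: 'a by (auto simp: val3_def)
  have G1: "J i u v u = u" if "i \<in> {1..n+1}" "u \<in> A" "v \<in> A" for i u v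
    using gen_id[OF alg _ that(2,3,2), of vx "app3 (j i) vx vy vx"] gumm that(1)
    unfolding gumm_terms_def J_def by (simp add: app3_eval[OF tj[OF that(1)]] evx val3_def)
  have G2: "P u w w = u" if "u \<in> A" "w \<in> A" for u w
    using gen_id[OF alg _ that(1,2,2), of vx "app3 p vx vz vz"] gumm
    unfolding gumm_terms_def P_def by (simp add: app3_eval[OF tp] evx val3_def)
  have G3: "P u u w = J 1 u u w" if "u \<in> A" "w \<in> A" for u w
    using gen_id[OF alg _ that(1,1,2), of "app3 p vx vx vz" "app3 (j 1) vx vx vz"] gumm
    unfolding gumm_terms_def P_def J_def by (simp add: app3_eval[OF tp] app3_eval[OF tj] evx val3_def)
  have G4: "J i u w w = J (Suc i) u w w" if "i \<in> {1..n}" "odd i" "u \<in> A" "w \<in> A" for i u w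
    using gen_id[OF alg _ that(3,4,4), of "app3 (j i) vx vz vz" "app3 (j (i+1)) vx vz vz"] gumm that
    unfolding gumm_terms_def P_def J_def by (simp add: app3_eval[OF tj] evx val3_def)
  have G5: "J i u u w = J (Suc i) u u w" if "i \<in> {1..n}" "even i" "u \<in> A" "w \<in> A" for i u w
    using gen_id[OF alg _ that(3,3,4), of "app3 (j i) vx vx vz" "app3 (j (i+1)) vx vx vz"] gumm that
    unfolding gumm_terms_def P_def J_def by (simp add: app3_eval[OF tj] evx val3_def)
  have G6: "J (n+1) u v w = w" if "u \<in> A" "v \<in> A" "w \<in> A" for u v w
    using gen_id[OF alg _ that, of "app3 (j (n+1)) vx vy vz" vz] gumm
    unfolding gumm_terms_def J_def by (simp add: app3_eval[OF tj] evx val3_def)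

  have BB: "B (Suc (Suc k)) = B k" for k by (simp add: B_def)
  have B0: "B 0 = \<beta>" and B1: "B 1 = \<gamma>" by (simp_all add: B_def)
  define z where "z k = P a (x k) (x (N - k))" for k
  have zstep: "(z k, z (Suc k)) \<in> B k" if "k < M" for k
  proof -
    have k1: "k < N" and k2: "N - Suc k < N" using that NM by auto
    have e: "Suc (N - Suc k) = N - k" using that NM by simp
    have par: "B (N - Suc k) = B k" using that NM by (simp add: B_def)
    have r2: "(x (N - k), x (N - Suc k)) \<in> B k"
      using xsym[OF k2] par e by simp
    show ?thesis unfolding z_def P_def
      by (rule ev3_compat[OF cB tp cfB(4)[OF aA] xs[rule_format, OF k1] r2])
  qed
  have fold: "(z k, a) \<in> altcomp (B k) (B (Suc k)) (M - k + 1)" if "k \<le> M" for k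
    using that
  proof (induction "M - k" arbitrary: k)
    case 0
    then have kM: "k = M" by simp
    have NkM: "N - M = Suc M" using NM by simp
    have kN: "M < N" using NM by simp
    have "(z M, P a (x (Suc M)) (x (Suc M))) \<in> B M"
      unfolding z_def P_def NkM
      by (rule ev3_compat[OF cB tp cfB(4)[OF aA] xs[rule_format, OF kN] cfB(4)[OF xA]]) (use NM in simp)
    moreover have "P a (x (Suc M)) (x (Suc M)) = a" using G2 aA xA NM by simp
    ultimately show ?case using kM by simp
  next
    case (Suc d)
    then have kM: "k < M" by simp
    have IH: "(z (Suc k), a) \<in> altcomp (B (Suc k)) (B k) (M - Suc k + 1)"
      using Suc.hyps(1)[of "Suc k"] Suc.hyps(2) kM BB by simp
    have "M - k + 1 = Suc (M - Suc k + 1)" using kM by simp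
    then show ?case using zstep[OF kM] IH by auto
  qed
  define d where "d = J 1 a (x 1) c"
  have x1A: "x 1 \<in> A" using xA NM by simp
  have z1a: "(z 1, a) \<in> altcomp \<gamma> \<beta> M"
    using fold[of 1] M1 B1 BB[of 0] B0 by simp
  have 1: "1 \<in> {1..n+1}" by simp
  have "z 0 = J 1 a a c" unfolding z_def using x0 xN G3 aA cA by simp
  moreover have "(d, J 1 a a c) \<in> \<beta>" unfolding d_def J_def
    using ev3_compat[OF cb tj[OF 1] cong_facts(4)[OF cb aA] _ cong_facts(4)[OF cb cA], of "x 1" "x 0"]
      xsym[of 0] NM x0 B0 by simp
  moreover have "(z 0, z 1) \<in> \<beta>" using zstep[of 0] M1 B0 by simp
  ultimately have "(d, z 1) \<in> \<beta>" using cong_facts(3)[OF cb] by (metis transD)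
  then have "(d, a) \<in> altcomp \<beta> \<gamma> (M + 1)" using z1a by auto
  moreover have "(d, a) \<in> \<alpha>"
  proof -
    have "(d, J 1 a (x 1) a) \<in> \<alpha>" unfolding d_def J_def
      by (rule ev3_compat[OF ca tj[OF 1] cfa(4)[OF aA] cfa(4)[OF x1A]]) (use ac(1) cfa(2) in \<open>meson symD\<close>)
    then show ?thesis using G1[OF 1 aA x1A] by simp
  qed
  ultimately have part1: "(a, d) \<in> \<alpha> \<inter> converse (altcomp \<beta> \<gamma> (M + 1))" using cfa(2) by (auto dest: symD)

  define X where "X = \<alpha> \<inter> \<gamma>"
  define Y where "Y = \<alpha> \<inter> \<beta>"
  define m where "m = 2 * M"
  have symX: "sym X" and symY: "sym Y" and trY: "trans Y"
    unfolding X_def Y_def using cfa cong_facts[OF cb] cong_facts[OF cg]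
    by (auto intro: sym_Int trans_Int)
  define e where "e i = J i a (x 1) c" for i
  define f where "f i = J i a c c" for i
  define g where "g i = J i a a c" for i
  have Ja: "(J i a u c, a) \<in> \<alpha>" if "i \<in> {1..n+1}" "u \<in> A" for i u
  proof -
    have "(J i a u c, J i a u a) \<in> \<alpha>" unfolding J_def
      by (rule ev3_compat[OF ca tj[OF that(1)] cfa(4)[OF aA] cfa(4)[OF that(2)]]) (use ac(1) cfa(2) in \<open>meson symD\<close>)
    then show ?thesis using G1[OF that(1) aA that(2)] by simp
  qed
  have Jaa: "(J i a u c, J i a v c) \<in> \<alpha>" if "i \<in> {1..n+1}" "u \<in> A" "v \<in> A" for i u v
    using Ja[OF that(1,2)] Ja[OF that(1,3)] cfa(2,3) by (meson symD transD)
  have F1: "(e i, f i) \<in> altcomp X Y m" if i: "i \<in> {1..n+1}" for i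
    unfolding altcomp_path
  proof (intro exI conjI allI impI)
    let ?w = "\<lambda>k. J i a (x (Suc k)) c"
    show "?w 0 = e i" by (simp add: e_def)
    show "?w m = f i" using xN NM m_def by (simp add: f_def)
    fix k assume k: "k < m"
    have kN: "Suc k < N" using k NM m_def by simp
    have "(?w k, ?w (Suc k)) \<in> B (Suc k)" unfolding J_def
      by (rule ev3_compat[OF cB tj[OF i] cfB(4)[OF aA] xs[rule_format, OF kN] cfB(4)[OF cA]])
    moreover have "(?w k, ?w (Suc k)) \<in> \<alpha>" using Jaa[OF i] xA kN by simp
    ultimately show "(?w k, ?w (Suc k)) \<in> (if even k then X else Y)"
      by (auto simp: X_def Y_def B_def)
  qed
  have F2: "(e i, g i) \<in> Y" if i: "i \<in> {1..n+1}" for i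
  proof -
    have "(e i, g i) \<in> \<beta>" unfolding e_def g_def J_def
      using ev3_compat[OF cb tj[OF i] cong_facts(4)[OF cb aA] _ cong_facts(4)[OF cb cA], of "x 1" "x 0"]
        xsym[of 0] NM x0 B0 by simp
    moreover have "(e i, g i) \<in> \<alpha>" unfolding e_def g_def using Jaa[OF i x1A aA] .
    ultimately show ?thesis by (simp add: Y_def)
  qed
  have m2: "m \<ge> 2" "even m" using M1 m_def by auto
  have chain: "(e 1, if even l then e (Suc l) else f (Suc l)) \<in> altcomp X Y (l * m)" if "l \<le> n" for l
    using that
  proof (induction l)
    case 0 then show ?case by simp
  next
    case (Suc l)
    have IH: "(e 1, if even l then e (Suc l) else f (Suc l)) \<in> altcomp X Y (l * m)"
      using Suc by simp
    have l1: "Suc l \<in> {1..n}" and l1': "Suc l \<in> {1..n+1}" and l2: "Suc (Suc l) \<in> {1..n+1}"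
      using Suc.prems by auto
    show ?case
    proof (cases "even l")
      case True
      have "f (Suc l) = f (Suc (Suc l))" unfolding f_def using G4[OF l1 _ aA cA] True by simp
      moreover have "(e 1, f (Suc l)) \<in> altcomp X Y (l * m) O altcomp X Y m"
        using IH True F1[OF l1'] by auto
      moreover have "altcomp X Y (l * m) O altcomp X Y m = altcomp X Y (Suc l * m)"
        using altcomp_add[of X Y "l * M" m] m_def by (simp add: algebra_simps)
      ultimately show ?thesis using True by simp
    next
      case False
      have gg: "g (Suc l) = g (Suc (Suc l))" unfolding g_def using G5[OF l1 _ aA cA] False by simp
      have c1: "(f (Suc l), e (Suc l)) \<in> altcomp Y X m"
        using F1[OF l1'] altcomp_conv[OF symX symY, of m] m2 by auto
      have c2: "(e (Suc l), e (Suc (Suc l))) \<in> Y"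
        using F2[OF l1'] F2[OF l2] gg symY trY by (metis symD transD)
      have "(e 1, e (Suc (Suc l))) \<in> altcomp X Y (l * m) O altcomp Y X m O Y"
        using IH False c1 c2 by auto
      moreover have "altcomp X Y (l * m) O altcomp Y X m O Y \<subseteq> altcomp X Y (l * m + m)"
        apply (rule altcomp_merge[OF trY])
        using False m2 by (auto simp: m_def elim: oddE)
      ultimately show ?thesis using False by (auto simp: algebra_simps)
    qed
  qed
  have "(d, c) \<in> altcomp X Y (n * m)"
  proof -
    have n1: "n + 1 \<in> {1..n+1}" by simp
    have "e (Suc n) = c" "f (Suc n) = c" using G6 aA cA x1A by (simp_all add: e_def f_def)
    moreover have "e 1 = d" by (simp add: e_def d_def)
    ultimately show ?thesis using chain[of n] by (simp split: if_splits)
  qed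
  then show ?thesis using part1 unfolding X_def Y_def m_def by (auto simp: algebra_simps)
qed


theorem theorem4p5:
  fixes ar :: "'f \<Rightarrow> nat" and Sig :: "('f trm \<times> 'f trm) set"
    and n :: nat and p :: "'f trm" and j :: "nat \<Rightarrow> 'f trm"
    and A :: "'a set" and F :: "'f \<Rightarrow> 'a list \<Rightarrow> 'a"
    and \<alpha> \<beta> \<gamma> :: "'a rel"
  assumes Sig_wf: "\<forall>(s, t)\<in>Sig. wf_trm ar s \<and> wf_trm ar t"
    and gumm: "gumm_terms ar Sig n p j"
    and alg: "in_variety ar Sig A F"
    and ca: "is_congruence ar A F \<alpha>"
    and cb: "is_congruence ar A F \<beta>"
    and cg: "is_congruence ar A F \<gamma>"
  shows "(\<forall>h m. m = 4 * h + 2 \<longrightarrow>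
            \<alpha> \<inter> altcomp \<beta> \<gamma> (m + 1)
              \<subseteq> (\<alpha> \<inter> altcomp \<gamma> \<beta> (2 * h + 2)) O altcomp (\<alpha> \<inter> \<gamma>) (\<alpha> \<inter> \<beta>) (m * n)
          \<and> \<alpha> \<inter> altcomp \<beta> \<gamma> (m + 1)
              \<subseteq> altcomp (\<alpha> \<inter> \<beta>) (\<alpha> \<inter> \<gamma>) (m * n) O (\<alpha> \<inter> altcomp \<beta> \<gamma> (2 * h + 2)))
       \<and> (\<forall>h m. h \<ge> 1 \<longrightarrow> m = 4 * h \<longrightarrow>
            \<alpha> \<inter> altcomp \<beta> \<gamma> (m + 1)
              \<subseteq> (\<alpha> \<inter> altcomp \<beta> \<gamma> (2 * h + 1)) O altcomp (\<alpha> \<inter> \<gamma>) (\<alpha> \<inter> \<beta>) (m * n))"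
  proof -
  have symb: "sym \<beta>" "sym \<gamma>" "sym \<alpha>" using cong_facts cb cg ca by blast+
  have symab: "sym (\<alpha> \<inter> \<beta>)" "sym (\<alpha> \<inter> \<gamma>)" using symb by (auto intro: sym_Int)
  have conv_odd: "converse (altcomp \<beta> \<gamma> (2 * M + 1)) = altcomp \<beta> \<gamma> (2 * M + 1)" for M
    using altcomp_conv[OF symb(1,2), of "2*M+1"] by simp
  note C = core[OF gumm alg ca cb cg]
  have P1: "\<alpha> \<inter> altcomp \<beta> \<gamma> (m + 1)
              \<subseteq> (\<alpha> \<inter> altcomp \<gamma> \<beta> (2 * h + 2)) O altcomp (\<alpha> \<inter> \<gamma>) (\<alpha> \<inter> \<beta>) (m * n)"
    if m: "m = 4 * h + 2" for h m
  proof
    fix q assume q: "q \<in> \<alpha> \<inter> altcomp \<beta> \<gamma> (m + 1)"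
    obtain a c where [simp]: "q = (a, c)" by fastforce
    have "(a, c) \<in> (\<alpha> \<inter> converse (altcomp \<beta> \<gamma> (2*h+1 + 1))) O altcomp (\<alpha> \<inter> \<gamma>) (\<alpha> \<inter> \<beta>) (2 * (2*h+1) * n)"
      by (rule C[of "m+1" "2*h+1"]) (use q m in auto)
    moreover have "converse (altcomp \<beta> \<gamma> (2*h+1 + 1)) = altcomp \<gamma> \<beta> (2 * h + 2)"
      using altcomp_conv[OF symb(1,2), of "2*h+2"] by simp
    ultimately show "q \<in> (\<alpha> \<inter> altcomp \<gamma> \<beta> (2 * h + 2)) O altcomp (\<alpha> \<inter> \<gamma>) (\<alpha> \<inter> \<beta>) (m * n)"
      using m by (simp add: algebra_simps)
  qed
  have P2: "\<alpha> \<inter> altcomp \<beta> \<gamma> (m + 1)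
              \<subseteq> altcomp (\<alpha> \<inter> \<beta>) (\<alpha> \<inter> \<gamma>) (m * n) O (\<alpha> \<inter> altcomp \<beta> \<gamma> (2 * h + 2))"
    if m: "m = 4 * h + 2" for h m
  proof
    fix q assume q: "q \<in> \<alpha> \<inter> altcomp \<beta> \<gamma> (m + 1)"
    obtain a c where [simp]: "q = (a, c)" by fastforce
    have mm: "m + 1 = 2 * (2*h+1) + 1" using m by simp
    have "(a, c) \<in> altcomp \<beta> \<gamma> (2 * (2*h+1) + 1)" using q mm by simp
    then have "(c, a) \<in> converse (altcomp \<beta> \<gamma> (2 * (2*h+1) + 1))" by (rule converseI)
    then have "(c, a) \<in> altcomp \<beta> \<gamma> (m + 1)" using conv_odd[of "2*h+1"] mm by metis
    moreover have "(c, a) \<in> \<alpha>" using q symb(3) by (auto dest: symD)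
    ultimately have "(c, a) \<in> \<alpha> \<inter> altcomp \<beta> \<gamma> (m + 1)" by simp
    then have "(c, a) \<in> (\<alpha> \<inter> altcomp \<gamma> \<beta> (2 * h + 2)) O altcomp (\<alpha> \<inter> \<gamma>) (\<alpha> \<inter> \<beta>) (m * n)"
      using P1[OF m] by blast
    then have "(a, c) \<in> converse (altcomp (\<alpha> \<inter> \<gamma>) (\<alpha> \<inter> \<beta>) (m * n)) O converse (\<alpha> \<inter> altcomp \<gamma> \<beta> (2 * h + 2))"
      by auto
    moreover have "converse (altcomp (\<alpha> \<inter> \<gamma>) (\<alpha> \<inter> \<beta>) (m * n)) = altcomp (\<alpha> \<inter> \<beta>) (\<alpha> \<inter> \<gamma>) (m * n)"
      using altcomp_conv[OF symab(2,1), of "m*n"] m by simp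
    moreover have "converse (\<alpha> \<inter> altcomp \<gamma> \<beta> (2 * h + 2)) = \<alpha> \<inter> altcomp \<beta> \<gamma> (2 * h + 2)"
      using altcomp_conv[OF symb(2,1), of "2*h+2"] symb(3) by (simp add: converse_Int sym_conv_converse_eq)
    ultimately show "q \<in> altcomp (\<alpha> \<inter> \<beta>) (\<alpha> \<inter> \<gamma>) (m * n) O (\<alpha> \<inter> altcomp \<beta> \<gamma> (2 * h + 2))"
      by simp
  qed
  have P3: "\<alpha> \<inter> altcomp \<beta> \<gamma> (m + 1)
              \<subseteq> (\<alpha> \<inter> altcomp \<beta> \<gamma> (2 * h + 1)) O altcomp (\<alpha> \<inter> \<gamma>) (\<alpha> \<inter> \<beta>) (m * n)"
    if h: "h \<ge> 1" and m: "m = 4 * h" for h m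
  proof
    fix q assume q: "q \<in> \<alpha> \<inter> altcomp \<beta> \<gamma> (m + 1)"
    obtain a c where [simp]: "q = (a, c)" by fastforce
    have "(a, c) \<in> (\<alpha> \<inter> converse (altcomp \<beta> \<gamma> (2*h + 1))) O altcomp (\<alpha> \<inter> \<gamma>) (\<alpha> \<inter> \<beta>) (2 * (2*h) * n)"
      by (rule C[of "m+1" "2*h"]) (use q m h in auto)
    then show "q \<in> (\<alpha> \<inter> altcomp \<beta> \<gamma> (2 * h + 1)) O altcomp (\<alpha> \<inter> \<gamma>) (\<alpha> \<inter> \<beta>) (m * n)"
      using m conv_odd[of h] by (simp add: algebra_simps)
  qed
  show ?thesis using P1 P2 P3 by blast
qed

end
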